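(* Let $U$ be a countably infinite universe and let $\mathcal{C}=(L_1,L_2,\ldots)$ be a countable collection of languages over $U$. For every finite $n$, there exists an algorithm $\mathcal{A}$ that non-uniformly generates from $\mathcal{C}$, with generation times $t(L_1),t(L_2),\ldots$ (where $t(L_i)=t_{\mathcal{A}}(L_i)$), such that the following holds: every algorithm $\mathcal{G}$ with $t_{\mathcal{G}}(L_i)<t(L_i)$ for some $i\le n$ satisfies $t_{\mathcal{G}}(L_j)>t(L_j)$ for some other index $j\neq i$ with $j\le n$.
   Context: A language is an infinite subset of $U$. A collection $\mathcal{C}=(L_1,L_2,\ldots)$ is a sequence of languages; repetitions are allowed and entries are distinguished by their index. An enumeration of a language $L$ is a sequence $x_1,x_2,\ldots$ with $x_t\in L$ for all $t$ and such that every $x\in L$ equals $x_t$ for some finite $t$. A generating algorithm, at each time step $t\ge 1$, receives $x_1,\ldots,x_t$ and outputs a string $z_t\in U$. $S_t$ denotes the set of distinct strings among $x_1,\ldots,x_t$. An algorithm $\mathcal{G}$ non-uniformly generates from $\mathcal{C}$ if for every index $i$ there is a finite number $t(L_i)$ such that for every enumeration of $L_i$ presented to $\mathcal{G}$, $z_t\in L_i\setminus S_t$ for all $t$ with $|S_t|\ge t(L_i)$. The generation time $t_{\mathcal{G}}(L_i)$ of an algorithm $\mathcal{G}$ for $L_i$ is the least such number (and $\infty$ if none exists). *)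

theory Defs
  imports Main "HOL-Library.Extended_Nat" "HOL-Library.Countable"
begin

text \<open>A generating algorithm maps the finite prefix x_1,...,x_t (as a list, t >= 1)
  to its alg_output z_t.  An enumeration is a sequence x :: nat => 'u (x 0 plays the role of x_1).\<close>

type_synonym 'u algorithm = "'u list \<Rightarrow> 'u"

definition enumeration :: "'u set \<Rightarrow> (nat \<Rightarrow> 'u) \<Rightarrow> bool" where
  "enumeration L x \<longleftrightarrow> (\<forall>t. x t \<in> L) \<and> (\<forall>y\<in>L. \<exists>t. x t = y)"

definition S_set :: "(nat \<Rightarrow> 'u) \<Rightarrow> nat \<Rightarrow> 'u set" where
  "S_set x t = x ` {..<t}"

definition alg_output :: "'u algorithm \<Rightarrow> (nat \<Rightarrow> 'u) \<Rightarrow> nat \<Rightarrow> 'u" where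
  "alg_output G x t = G (map x [0..<t])"

definition gen_threshold :: "'u algorithm \<Rightarrow> 'u set \<Rightarrow> nat \<Rightarrow> bool" where
  "gen_threshold G L T \<longleftrightarrow>
     (\<forall>x. enumeration L x \<longrightarrow>
        (\<forall>t\<ge>1. card (S_set x t) \<ge> T \<longrightarrow> alg_output G x t \<in> L - S_set x t))"

definition gen_time :: "'u algorithm \<Rightarrow> 'u set \<Rightarrow> enat" where
  "gen_time G L = (if \<exists>T. gen_threshold G L T then enat (LEAST T. gen_threshold G L T) else \<infinity>)"

definition nonuniformly_generates :: "'u algorithm \<Rightarrow> (nat \<Rightarrow> 'u set) \<Rightarrow> bool" where
  "nonuniformly_generates G C \<longleftrightarrow> (\<forall>i. \<exists>T. gen_threshold G (C i) T)"

end

theory Submission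
  imports Defs
begin

definition good :: "(nat \<Rightarrow> 'u set) \<Rightarrow> nat \<Rightarrow> nat \<Rightarrow> bool" where
  "good C m s \<longleftrightarrow> (\<forall>F \<subseteq> {..m}. finite (\<Inter>j\<in>F. C j) \<longrightarrow> card (\<Inter>j\<in>F. C j) < s)"

lemma good_mono: "good C M s \<Longrightarrow> j \<le> M \<Longrightarrow> good C j s"
  unfolding good_def by (meson atMost_subset_iff order_trans)

lemma good_ex: "\<exists>s0. \<forall>s\<ge>s0. good C M s"
proof -
  define s0 where "s0 = Suc (\<Sum>F\<in>Pow {..M}. card (\<Inter>j\<in>F. C j))"
  have "good C M s" if "s \<ge> s0" for s
    unfolding good_def
  proof (intro allI impI)
    fix F assume "F \<subseteq> {..M}" "finite (\<Inter>j\<in>F. C j)"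
    have "card (\<Inter>j\<in>F. C j) \<le> (\<Sum>F\<in>Pow {..M}. card (\<Inter>j\<in>F. C j))"
      by (rule member_le_sum) (use \<open>F \<subseteq> {..M}\<close> in auto)
    then show "card (\<Inter>j\<in>F. C j) < s" using that s0_def by linarith
  qed
  then show ?thesis by blast
qed

lemma set_prefix: "set (map x [0..<t]) = S_set x t"
  unfolding S_set_def by (auto simp: atLeast0LessThan)

lemma transfer:
  fixes C :: "nat \<Rightarrow> 'u set" and G :: "'u algorithm"
  assumes inf: "infinite (UNIV :: 'u set)"
    and thr: "\<forall>j<n. gen_threshold G (C j) (T j)"
  shows "\<exists>G'. nonuniformly_generates G' C \<and> (\<forall>j<n. gen_threshold G' (C j) (T j))"
proof -
  define Fam where "Fam = (\<lambda>S::'u set. {j. (j \<le> card S \<and> good C j (card S) \<and> S \<subseteq> C j)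
        \<or> (j < n \<and> S \<subseteq> C j \<and> T j \<le> card S)})"
  define I where "I = (\<lambda>S. (\<Inter>j\<in>Fam S. C j) - S)"
  define G' where "G' = (\<lambda>xs. if I (set xs) \<noteq> {} then (SOME y. y \<in> I (set xs)) else G xs)"
  have G'_I: "G' xs \<in> I (set xs)" if "I (set xs) \<noteq> {}" for xs
    using that unfolding G'_def by (auto intro: someI_ex)
  have part1: "\<forall>j<n. gen_threshold G' (C j) (T j)"
  proof (intro allI impI)
    fix j assume jn: "j < n"
    show "gen_threshold G' (C j) (T j)"
      unfolding gen_threshold_def
    proof (intro allI impI)
      fix x t assume en: "enumeration (C j) x" and t1: "1 \<le> t" and ct: "T j \<le> card (S_set x t)"
      let ?xs = "map x [0..<t]"
      have sub: "S_set x t \<subseteq> C j" using en unfolding enumeration_def S_set_def by auto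
      have jF: "j \<in> Fam (S_set x t)" unfolding Fam_def using jn sub ct by auto
      show "alg_output G' x t \<in> C j - S_set x t"
      proof (cases "I (set ?xs) \<noteq> {}")
        case True
        then have "G' ?xs \<in> I (S_set x t)" using G'_I set_prefix by metis
        then show ?thesis unfolding alg_output_def I_def using jF by auto
      next
        case False
        then have "G' ?xs = G ?xs" unfolding G'_def by auto
        moreover have "alg_output G x t \<in> C j - S_set x t"
          using thr jn en t1 ct unfolding gen_threshold_def by blast
        ultimately show ?thesis unfolding alg_output_def by simp
      qed
    qed
  qed
  have part2: "\<exists>N. gen_threshold G' (C i) N" for i
  proof -
    define M where "M = max i n"
    obtain s0 where s0: "\<forall>s\<ge>s0. good C M s" using good_ex by blast
    define N where "N = max s0 M"
    have "gen_threshold G' (C i) N"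
      unfolding gen_threshold_def
    proof (intro allI impI)
      fix x t assume en: "enumeration (C i) x" and t1: "1 \<le> t" and ct: "N \<le> card (S_set x t)"
      define S where "S = S_set x t"
      have finS: "finite S" unfolding S_def S_set_def by auto
      have sub: "S \<subseteq> C i" using en unfolding enumeration_def S_def S_set_def by auto
      have gd: "good C j (card S)" if "j \<le> M" for j
        using good_mono[OF _ that] s0 ct N_def S_def by auto
      have FamEq: "Fam S = {j. j \<le> card S \<and> good C j (card S) \<and> S \<subseteq> C j}"
        unfolding Fam_def using gd ct N_def M_def by (auto simp: S_def)
      have iF: "i \<in> Fam S" unfolding FamEq using gd sub ct N_def M_def S_def by auto
      have infI: "infinite (\<Inter>j\<in>Fam S. C j)"
      proof
        assume fin: "finite (\<Inter>j\<in>Fam S. C j)"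
        have finF: "finite (Fam S)" unfolding FamEq by auto
        define m where "m = Max (Fam S)"
        have mF: "m \<in> Fam S" unfolding m_def using finF iF by (intro Max_in) auto
        have "Fam S \<subseteq> {..m}" unfolding m_def using finF by auto
        with mF fin have "card (\<Inter>j\<in>Fam S. C j) < card S"
          unfolding FamEq good_def by auto
        moreover have "S \<subseteq> (\<Inter>j\<in>Fam S. C j)" unfolding FamEq by auto
        hence "card S \<le> card (\<Inter>j\<in>Fam S. C j)" using fin card_mono by blast
        ultimately show False by simp
      qed
      have "I S \<noteq> {}"
      proof
        assume "I S = {}"
        then have "(\<Inter>j\<in>Fam S. C j) \<subseteq> S" unfolding I_def by auto
        then show False using infI finS finite_subset by blast
      qed
      then have "G' (map x [0..<t]) \<in> I S" using G'_I set_prefix S_def by metis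
      then show "alg_output G' x t \<in> C i - S_set x t"
        unfolding alg_output_def I_def S_def[symmetric] using iF by auto
    qed
    then show ?thesis by blast
  qed
  show ?thesis using part1 part2 unfolding nonuniformly_generates_def by blast
qed

lemma gen_time_le: "gen_threshold G L T \<Longrightarrow> gen_time G L \<le> enat T"
  unfolding gen_time_def by (auto intro: Least_le)

lemma gen_time_fin: "gen_time G L \<noteq> \<infinity> \<Longrightarrow> gen_threshold G L (the_enat (gen_time G L))"
  unfolding gen_time_def by (auto split: if_splits intro: LeastI_ex)

theorem mainTheorem1:
  fixes C :: "nat \<Rightarrow> ('u::countable) set" and n :: nat
  assumes "infinite (UNIV :: 'u set)"
    and "\<And>i. infinite (C i)"
  shows "\<exists>A. nonuniformly_generates A C \<and>
           (\<forall>G i. i < n \<and> gen_time G (C i) < gen_time A (C i) \<longrightarrow>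
              (\<exists>j<n. j \<noteq> i \<and> gen_time G (C j) > gen_time A (C j)))"
proof -
  define cost where "cost = (\<lambda>A. \<Sum>j<n. the_enat (gen_time A (C j)))"
  have fin: "gen_time A (C j) = enat (the_enat (gen_time A (C j)))"
    if nu: "nonuniformly_generates A C" for A j
  proof -
    obtain T where "gen_threshold A (C j) T" using nu unfolding nonuniformly_generates_def by blast
    then have "gen_time A (C j) \<noteq> \<infinity>" using gen_time_le by (metis enat_ord_simps(5) infinity_ileE)
    then show ?thesis by auto
  qed
  have "\<exists>A. nonuniformly_generates A C"
    using transfer[OF assms(1), of 0 "\<lambda>_. undefined"] by blast
  then obtain A where A: "nonuniformly_generates A C"
    and Amin: "\<forall>B. nonuniformly_generates B C \<longrightarrow> cost A \<le> cost B"
    using ex_has_least_nat[of "\<lambda>A. nonuniformly_generates A C" _ cost] by blast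
  have "\<exists>j<n. j \<noteq> i \<and> gen_time G (C j) > gen_time A (C j)"
    if i: "i < n" and lt: "gen_time G (C i) < gen_time A (C i)" for G i
  proof (rule ccontr)
    assume "\<not> ?thesis"
    then have le: "\<forall>j<n. gen_time G (C j) \<le> gen_time A (C j)"
      using lt by (metis less_imp_le not_le)
    define T where "T = (\<lambda>j. the_enat (gen_time G (C j)))"
    have GT: "gen_time G (C j) = enat (T j)" if "j < n" for j
      proof -
      have "gen_time G (C j) \<le> enat (the_enat (gen_time A (C j)))" using le that fin[OF A, of j] by metis
      then obtain k where "gen_time G (C j) = enat k" by (cases "gen_time G (C j)") auto
      then show ?thesis unfolding T_def by simp
    qed
    have thr: "\<forall>j<n. gen_threshold G (C j) (T j)"
      using GT gen_time_fin T_def by (metis infinity_ne_i0 enat.distinct(2))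
    obtain G' where G': "nonuniformly_generates G' C" and thr': "\<forall>j<n. gen_threshold G' (C j) (T j)"
      using transfer[OF assms(1) thr] by blast
    have a: "the_enat (gen_time G' (C j)) \<le> T j" if "j < n" for j
      using gen_time_le[of G' "C j" "T j"] thr' that fin[OF G', of j] by (metis enat_ord_simps(1))
    have b: "T j \<le> the_enat (gen_time A (C j))" if "j < n" for j
      using le that GT fin[OF A, of j] by (metis enat_ord_simps(1))
    have c: "T i < the_enat (gen_time A (C i))"
      using lt i GT fin[OF A, of i] by (metis enat_ord_simps(2))
    have "cost G' < cost A" unfolding cost_def
    proof (rule le_less_trans[OF sum_mono])
      show "the_enat (gen_time G' (C j)) \<le> T j" if "j \<in> {..<n}" for j using a that by auto
      show "sum T {..<n} < (\<Sum>j<n. the_enat (gen_time A (C j)))"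
        by (rule sum_strict_mono_ex1) (use b c i in auto)
    qed
    then show False using Amin G' by (meson not_le)
  qed
  then show ?thesis using A by blast
qed

end
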